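(* Let $\{(\varrho_i^k,u^k_{i-1/2})\}$ be a numerical solution of the scheme. Then for every $m=1,\dots,M$ there exist numbers $\varrho^*_{i,k}$ between $\varrho_i^{k-1}$ and $\varrho_i^k$ and $\theta^k_{i+1/2}$ between $\varrho_i^k$ and $\varrho_{i+1}^k$ such that $$\Delta x\sum_{i=0}^{N-1}\Big(\varrho_i^m\frac{|\widehat u_i^m|^2}2+\frac{p(\varrho_i^m)}{\gamma-1}\Big)+\mu\,\Delta t\,\Delta x\sum_{k=1}^m\sum_{i=0}^{N-1}|\partial_iu^k|^2+\mathcal N_1+\mathcal N_2+\mathcal N_3+\mathcal N_4=\Delta x\sum_{i=0}^{N-1}\Big(\varrho_i^0\frac{|\widehat u_i^0|^2}2+\frac{p(\varrho_i^0)}{\gamma-1}\Big),$$ where $\mathcal N_1=\frac{(\Delta t)^2\Delta x}{2(\gamma-1)}\sum_{k=1}^m\sum_{i=0}^{N-1}p''(\varrho^*_{i,k})|\partial_t^k\varrho_i|^2$, $\mathcal N_2=\frac{\Delta t(\Delta x)^2}{2(\gamma-1)}\sum_{k=1}^m\sum_{i=0}^{N-2}p''(\theta^k_{i+1/2})|\partial_{i+1/2}\varrho^k|^2|u^k_{i+1/2}|$, $\mathcal N_3=\frac{(\Delta t)^2\Delta x}{2}\sum_{k=1}^m\sum_{i=0}^{N-1}\varrho_i^{k-1}|\partial_t^k\widehat u_i|^2$, $\mathcal N_4=\frac{\Delta t(\Delta x)^2}{2}\sum_{k=1}^m\sum_{i=0}^{N-2}|\operatorname{Up}(\varrho^ku^k)_{i+1/2}|\,|\partial_{i+1/2}\widehat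 u^k|^2$. In particular all $\mathcal N_j\ge0$.
   Context: Fix $L>0$, $\mu>0$, $a>0$, $\gamma>1$, $p(\varrho)=a\varrho^\gamma$, $T>0$, integers $N,M\ge1$, $\Delta x=L/N$, $\Delta t=T/M$. Nodes $x_{i-1/2}=i\Delta x$ ($i=0,\dots,N$), cells $[x_{i-1/2},x_{i+1/2}]$ ($i=0,\dots,N-1$). Unknowns $\varrho_i^k$ ($i=0,\dots,N-1$), $u^k_{i-1/2}$ ($i=0,\dots,N$), $k=0,\dots,M$, with $u^k_{-1/2}=u^k_{N-1/2}=0$ for $k\ge1$. Notation: $z^+=\max\{z,0\}$, $z^-=\min\{z,0\}$; $\widehat u_i=\frac{u_{i-1/2}+u_{i+1/2}}2$; for $i=0,\dots,N-2$, $\operatorname{Up}(\varrho u)_{i+1/2}=\varrho_iu^+_{i+1/2}+\varrho_{i+1}u^-_{i+1/2}$, $\operatorname{Up}(\varrho\widehat uu)_{i+1/2}=\varrho_i\widehat u_iu^+_{i+1/2}+\varrho_{i+1}\widehat u_{i+1}u^-_{i+1/2}$, and both fluxes vanish at nodes $-1/2$, $N-1/2$; $\partial_{i+1/2}f=(f_{i+1}-f_i)/\Delta x$ (cell quantities), $\partial_iv=(v_{i+1/2}-v_{i-1/2})/\Delta x$ (nodal quantities), $\Delta_{i+1/2}u=(u_{i-1/2}-2u_{i+1/2}+u_{i+3/2})/\Delta x^2$, $\partial_t^kf=(f^k-f^{k-1})/\Delta t$. Initial values: $\varrho_0\in L^\gamma(0,L)$, $\varrho_0>0$, $u_0$ bounded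 on $[0,L]$; $\varrho_i^0=\frac1{\Delta x}\int_{x_{i-1/2}}^{x_{i+1/2}}\varrho_0$, $u^0_{i-1/2}=u_0(x_{i-1/2})$. The scheme, for $k=1,\dots,M$: $\partial_t^k\varrho_i+\partial_i\operatorname{Up}(\varrho^ku^k)=0$ ($i=0,\dots,N-1$) and $\partial_t^k\big(\frac{\varrho_i\widehat u_i+\varrho_{i+1}\widehat u_{i+1}}2\big)+\frac{\operatorname{Up}(\varrho^k\widehat u^ku^k)_{i+3/2}-\operatorname{Up}(\varrho^k\widehat u^ku^k)_{i-1/2}}{2\Delta x}=\mu\Delta_{i+1/2}u^k-\partial_{i+1/2}p(\varrho^k)$ ($i=0,\dots,N-2$). A numerical solution is any collection of numbers solving this system; its densities are strictly positive. *)

theory Defs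
  imports "HOL-Analysis.Analysis"
begin

text \<open>Conventions. Densities: rho k i = rho_i^k (i = 0..N-1).
  Velocities: u k j = u^k_{j-1/2} (node j, j = 0..N), so u^k_{i+1/2} = u k (i+1).\<close>

definition pres :: "real \<Rightarrow> real \<Rightarrow> real \<Rightarrow> real" where
  "pres a \<gamma> r = a * r powr \<gamma>"

text \<open>Second derivative of p(r) = a r^gamma (for r > 0).\<close>
definition pres2 :: "real \<Rightarrow> real \<Rightarrow> real \<Rightarrow> real" where
  "pres2 a \<gamma> r = a * \<gamma> * (\<gamma> - 1) * r powr (\<gamma> - 2)"

definition pospart :: "real \<Rightarrow> real" where "pospart z = max z 0"
definition negpart :: "real \<Rightarrow> real" where "negpart z = min z 0"

definition uhat :: "(nat \<Rightarrow> real) \<Rightarrow> nat \<Rightarrow> real" where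
  "uhat v i = (v i + v (i+1)) / 2"

definition UpRU :: "nat \<Rightarrow> (nat \<Rightarrow> real) \<Rightarrow> (nat \<Rightarrow> real) \<Rightarrow> nat \<Rightarrow> real" where
  "UpRU N r v j = (if j = 0 \<or> j \<ge> N then 0
      else r (j-1) * pospart (v j) + r j * negpart (v j))"

definition UpRUU :: "nat \<Rightarrow> (nat \<Rightarrow> real) \<Rightarrow> (nat \<Rightarrow> real) \<Rightarrow> nat \<Rightarrow> real" where
  "UpRUU N r v j = (if j = 0 \<or> j \<ge> N then 0
      else r (j-1) * uhat v (j-1) * pospart (v j) + r j * uhat v j * negpart (v j))"

definition between :: "real \<Rightarrow> real \<Rightarrow> real \<Rightarrow> bool" where
  "between x y z \<longleftrightarrow> min x y \<le> z \<and> z \<le> max x y"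

definition energy :: "real \<Rightarrow> real \<Rightarrow> nat \<Rightarrow> real \<Rightarrow> (nat \<Rightarrow> real) \<Rightarrow> (nat \<Rightarrow> real) \<Rightarrow> real" where
  "energy a \<gamma> N dx r v = dx * (\<Sum>i<N. r i * (uhat v i)\<^sup>2 / 2 + pres a \<gamma> (r i) / (\<gamma> - 1))"

definition num_solution ::
  "real \<Rightarrow> real \<Rightarrow> real \<Rightarrow> real \<Rightarrow> nat \<Rightarrow> nat \<Rightarrow> real \<Rightarrow> real \<Rightarrow>
   (real \<Rightarrow> real) \<Rightarrow> (real \<Rightarrow> real) \<Rightarrow> (nat \<Rightarrow> nat \<Rightarrow> real) \<Rightarrow> (nat \<Rightarrow> nat \<Rightarrow> real) \<Rightarrow> bool" where
  "num_solution \<mu> a \<gamma> L N M dx dt rho0 u0 rho u \<longleftrightarrow>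
     (\<forall>i<N. rho 0 i = (1/dx) * (LINT x:{real i * dx .. real (i+1) * dx}|lborel. rho0 x)) \<and>
     (\<forall>j\<le>N. u 0 j = u0 (real j * dx)) \<and>
     (\<forall>k\<in>{1..M}. u k 0 = 0 \<and> u k N = 0) \<and>
     (\<forall>k\<in>{1..M}. \<forall>i<N.
        (rho k i - rho (k-1) i) / dt
        + (UpRU N (rho k) (u k) (i+1) - UpRU N (rho k) (u k) i) / dx = 0) \<and>
     (\<forall>k\<in>{1..M}. \<forall>i<N-1.
        ((rho k i * uhat (u k) i + rho k (i+1) * uhat (u k) (i+1)) / 2
          - (rho (k-1) i * uhat (u (k-1)) i + rho (k-1) (i+1) * uhat (u (k-1)) (i+1)) / 2) / dt
        + (UpRUU N (rho k) (u k) (i+2) - UpRUU N (rho k) (u k) i) / (2 * dx)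
        = \<mu> * (u k i - 2 * u k (i+1) + u k (i+2)) / dx\<^sup>2
          - (pres a \<gamma> (rho k (i+1)) - pres a \<gamma> (rho k i)) / dx)"

end

theory Submission imports Defs begin

lemma taylorP:
  assumes x: "x > 0" and y: "y > 0"
  shows "\<exists>t. between x y t \<and> pres a g x = pres a g y + a*g*y powr (g-1)*(x-y) + pres2 a g t / 2 * (x-y)\<^sup>2"
proof (cases "x = y")
  case True then show ?thesis by (auto simp: between_def)
next
  case False
  define D where "D = (\<lambda>m::nat. \<lambda>t::real. if m = 0 then a * t powr g else if m = 1 then a*g*t powr (g-1) else pres2 a g t)"
  have der: "\<forall>m t. m < 2 \<and> min x y \<le> t \<and> t \<le> max x y \<longrightarrow> DERIV (D m) t :> D (Suc m) t"
  proof (intro allI impI)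
    fix m :: nat and t :: real assume h: "m < 2 \<and> min x y \<le> t \<and> t \<le> max x y"
    then have t: "t > 0" using x y by linarith
    consider "m = 0" | "m = 1" using h by linarith
    then show "DERIV (D m) t :> D (Suc m) t"
    proof cases
      case 1
      have "DERIV (\<lambda>t. a * t powr g) t :> a * (g * t powr (g - 1))"
        by (intro DERIV_cmult has_real_derivative_powr t)
      then show ?thesis using 1 by (simp add: D_def[abs_def] algebra_simps)
    next
      case 2
      have "DERIV (\<lambda>t. a*g * t powr (g-1)) t :> a*g * ((g-1) * t powr (g - 1 - 1))"
        by (intro DERIV_cmult has_real_derivative_powr t)
      then show ?thesis using 2 by (simp add: D_def[abs_def] pres2_def algebra_simps)
    qed
  qed
  obtain t where t: "(if x < y then x < t \<and> t < y else y < t \<and> t < x)"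
    "D 0 x = (\<Sum>m<2. (D m y / fact m) * (x - y)^m) + (D 2 t / fact 2) * (x - y)^2"
    using Taylor[of 2 D "D 0" "min x y" "max x y" y x] der False by auto
  have "between x y t" using t(1) by (auto simp: between_def split: if_splits)
  moreover have "pres a g x = pres a g y + a*g*y powr (g-1)*(x-y) + pres2 a g t / 2 * (x-y)\<^sup>2"
    using t(2) by (simp add: D_def pres_def numeral_2_eq_2)
  ultimately show ?thesis by blast
qed

definition dps :: "real \<Rightarrow> real \<Rightarrow> real \<Rightarrow> real" where
  "dps a g r = a*g/(g-1) * r powr (g-1)"

lemma powr_g: "x > 0 \<Longrightarrow> x powr (g::real) = x * x powr (g-1)"
  by (simp add: powr_diff powr_one_gt_zero_iff field_simps)

lemma alg1:
  fixes a g x y X Y R v :: real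
  assumes g: "g > 1" and e: "a*x*X = a*y*Y + a*g*Y*(x-y) + R/2*(x-y)\<^sup>2"
  shows "v * (a*y*Y - a*x*X) - x* v * (a*g/(g-1)*Y - a*g/(g-1)*X) = \<bar>v\<bar> * R/(2*(g-1))*(y-x)\<^sup>2 * sgn v"
proof -
  define k where "k = 1/(g-1)"
  have gk: "g*k = k + 1" using g by (simp add: k_def field_simps)
  have r1: "a*g/(g-1) = a*g*k" "R/(2*(g-1)) = R*k/2" by (simp_all add: k_def)
  have "v * (a*y*Y - a*x*X) - x* v * (a*g*k*Y - a*g*k*X) - v * (R*k/2)*(y-x)\<^sup>2
      = v * k * (a*x*X - (a*y*Y + a*g*Y*(x-y) + R/2*(x-y)\<^sup>2))"
    using gk by algebra
  also have "\<dots> = 0" using e by simp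
  finally have z: "v * (a*y*Y - a*x*X) - x* v * (a*g*k*Y - a*g*k*X) = v * (R*k/2)*(y-x)\<^sup>2" by simp
  have sv: "\<bar>v\<bar> * sgn v = v" by (auto simp: sgn_if)
  have "\<bar>v\<bar> * R/(2*(g-1))*(y-x)\<^sup>2 * sgn v = (\<bar>v\<bar> * sgn v) * (R/(2*(g-1)))*(y-x)\<^sup>2" by (simp add: algebra_simps)
  also have "\<dots> = v * (R*k/2)*(y-x)\<^sup>2" unfolding sv r1 ..
  finally have w: "\<bar>v\<bar> * R/(2*(g-1))*(y-x)\<^sup>2 * sgn v = v * (R*k/2)*(y-x)\<^sup>2" .
  show ?thesis unfolding r1(1) using z w by linarith
qed

lemma node_pres:
  assumes x: "x > 0" and y: "y > 0" and g: "g > 1"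
  shows "\<exists>t. between x y t \<and> v * (pres a g y - pres a g x) - (x*pospart v + y*negpart v)*(dps a g y - dps a g x)
      = \<bar>v\<bar> * pres2 a g t / (2*(g-1)) * (y-x)\<^sup>2"
proof (cases "v \<ge> 0")
  case True
  obtain t where t: "between x y t" "pres a g x = pres a g y + a*g*y powr (g-1)*(x-y) + pres2 a g t / 2 * (x-y)\<^sup>2"
    using taylorP[OF x y] by blast
  have t2: "a*x*(x powr (g-1)) = a*y*(y powr (g-1)) + a*g*(y powr (g-1))*(x-y) + pres2 a g t / 2 * (x-y)\<^sup>2"
    using t(2) powr_g[OF x, of g] powr_g[OF y, of g] by (simp add: pres_def mult.assoc)
  note A = alg1[OF g t2, of v]
  have e: "v * (pres a g y - pres a g x) - (x*pospart v + y*negpart v)*(dps a g y - dps a g x)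
      = \<bar>v\<bar> * pres2 a g t / (2*(g-1)) * (y-x)\<^sup>2"
  proof (cases "v = 0")
    case False
    with True have "sgn v = 1" by simp
    then show ?thesis using A True powr_g[OF x, of g] powr_g[OF y, of g]
      by (simp add: pospart_def negpart_def dps_def pres_def mult.assoc algebra_simps)
  qed (simp add: pospart_def negpart_def)
  show ?thesis using t(1) e by blast
next
  case False
  obtain t where t: "between y x t" "pres a g y = pres a g x + a*g*x powr (g-1)*(y-x) + pres2 a g t / 2 * (y-x)\<^sup>2"
    using taylorP[OF y x] by blast
  have t2: "a*y*(y powr (g-1)) = a*x*(x powr (g-1)) + a*g*(x powr (g-1))*(y-x) + pres2 a g t / 2 * (y-x)\<^sup>2"
    using t(2) powr_g[OF x, of g] powr_g[OF y, of g] by (simp add: pres_def mult.assoc)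
  note A = alg1[OF g t2, of v]
  have sv: "sgn v = -1" using False by simp
  have e: "v * (pres a g y - pres a g x) - (x*pospart v + y*negpart v)*(dps a g y - dps a g x)
      = \<bar>v\<bar> * pres2 a g t / (2*(g-1)) * (y-x)\<^sup>2"
    using A sv False powr_g[OF x, of g] powr_g[OF y, of g]
    by (simp add: pospart_def negpart_def dps_def pres_def power2_commute algebra_simps)
  have "between x y t" using t(1) by (auto simp: between_def)
  then show ?thesis using e by blast
qed

lemma node_kin:
  assumes "0 < j" "j < N" "r (j-1) > 0" "r j > 0"
  shows "UpRU N r v j * ((uhat v j)\<^sup>2 - (uhat v (j-1))\<^sup>2)/2 - UpRUU N r v j * (uhat v j - uhat v (j-1))
     = \<bar>UpRU N r v j\<bar> * (uhat v j - uhat v (j-1))\<^sup>2 / 2"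
proof (cases "v j \<ge> 0")
  case True
  then have "UpRU N r v j \<ge> 0" using assms by (simp add: UpRU_def pospart_def negpart_def)
  then show ?thesis using assms True
    by (simp add: UpRU_def UpRUU_def pospart_def negpart_def field_simps power2_eq_square)
next
  case False
  then have "UpRU N r v j \<le> 0" using assms mult_nonneg_nonpos[of "r j" "v j"] by (simp add: UpRU_def pospart_def negpart_def)
  then show ?thesis using assms False
    by (simp add: UpRU_def UpRUU_def pospart_def negpart_def field_simps power2_eq_square)
qed

lemma sbp:
  assumes "F 0 = 0" "F (Suc n) = (0::real)"
  shows "(\<Sum>i<Suc n. c i * (F (i+1) - F i)) = - (\<Sum>i<n. F (i+1) * (c (i+1) - c i))"
proof -
  have "(\<Sum>i<Suc n. c i * (F (i+1) - F i)) = (\<Sum>i<Suc n. c i * F (i+1)) - (\<Sum>i<Suc n. c i * F i)"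
    by (simp add: sum_subtractf right_diff_distrib)
  also have "(\<Sum>i<Suc n. c i * F (i+1)) = (\<Sum>i<n. c i * F (i+1))" using assms by simp
  also have "(\<Sum>i<Suc n. c i * F i) = (\<Sum>i<n. c (i+1) * F (i+1))"
    using assms by (simp add: sum.lessThan_Suc_shift del: sum.lessThan_Suc)
  finally show ?thesis by (simp add: sum_subtractf[symmetric] algebra_simps sum_negf[symmetric])
qed

lemma tkin:
  assumes "v 0 = 0" "v (Suc n) = (0::real)"
  shows "(\<Sum>i<n. v (i+1) * (m i + m (i+1)) / 2) = (\<Sum>i<Suc n. m i * ((v i + v (i+1))/2))"
proof -
  have "(\<Sum>i<Suc n. m i * ((v i + v (i+1))/2)) = (\<Sum>i<Suc n. m i * v i/2) + (\<Sum>i<Suc n. m i * v (i+1)/2)"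
    by (subst sum.distrib[symmetric]) (rule sum.cong, auto simp: field_simps)
  also have "(\<Sum>i<Suc n. m i * v i/2) = (\<Sum>i<n. m (i+1) * v (i+1)/2)"
    using assms by (simp add: sum.lessThan_Suc_shift del: sum.lessThan_Suc)
  also have "(\<Sum>i<Suc n. m i * v (i+1)/2) = (\<Sum>i<n. m i * v (i+1)/2)" using assms by simp
  finally have "(\<Sum>i<Suc n. m i * ((v i + v (i+1))/2)) = (\<Sum>i<n. m (i+1) * v (i+1)/2) + (\<Sum>i<n. m i * v (i+1)/2)" .
  also have "\<dots> = (\<Sum>i<n. v (i+1) * (m i + m (i+1)) / 2)"
    by (subst sum.distrib[symmetric]) (rule sum.cong, auto simp: field_simps)
  finally show ?thesis by simp
qed

lemma conv:
  assumes "v 0 = 0" "v (Suc n) = (0::real)" "G 0 = 0" "G (Suc n) = 0"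
  shows "(\<Sum>i<n. v (i+1) * (G (i+2) - G i)) = (\<Sum>i<n. G (i+1) * (v i - v (i+2)))"
proof (cases n)
  case 0 then show ?thesis by simp
next
  case (Suc k)
  have a1: "(\<Sum>i<n. v (i+1) * G (i+2)) = (\<Sum>i<k. v (i+1) * G (i+2))"
    using assms Suc by simp
  have a2: "(\<Sum>i<n. G (i+1) * v i) = (\<Sum>i<k. G (i+2) * v (i+1))"
    using assms Suc by (simp add: sum.lessThan_Suc_shift del: sum.lessThan_Suc)
  have a: "(\<Sum>i<n. v (i+1) * G (i+2)) = (\<Sum>i<n. G (i+1) * v i)"
    unfolding a1 a2 by (simp add: mult.commute)
  have b1: "(\<Sum>i<n. v (i+1) * G i) = (\<Sum>i<k. v (i+2) * G (i+1))"
    using assms Suc by (simp add: sum.lessThan_Suc_shift del: sum.lessThan_Suc)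
  have b2: "(\<Sum>i<n. G (i+1) * v (i+2)) = (\<Sum>i<k. G (i+1) * v (i+2))"
    using assms Suc by simp
  have b: "(\<Sum>i<n. v (i+1) * G i) = (\<Sum>i<n. G (i+1) * v (i+2))"
    unfolding b1 b2 by (simp add: mult.commute)
  have "(\<Sum>i<n. v (i+1) * (G (i+2) - G i)) = (\<Sum>i<n. v (i+1) * G (i+2)) - (\<Sum>i<n. v (i+1) * G i)"
    by (simp add: sum_subtractf right_diff_distrib)
  also have "\<dots> = (\<Sum>i<n. G (i+1) * (v i - v (i+2)))" unfolding a b
    by (simp add: sum_subtractf right_diff_distrib)
  finally show ?thesis .
qed

lemma visc:
  assumes "v 0 = 0" "v (Suc n) = (0::real)"
  shows "(\<Sum>i<n. v (i+1) * (v i - 2 * v (i+1) + v (i+2))) = - (\<Sum>i<Suc n. (v (i+1) - v i)\<^sup>2)"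
proof -
  have "(\<Sum>i<Suc n. (v (i+1) - v i)\<^sup>2) = (\<Sum>i<Suc n. (v (i+1) - v i) * (v (i+1) - v i))"
    by (simp add: power2_eq_square)
  also have "\<dots> = - (\<Sum>i<n. v (i+1) * ((v (i+2) - v (i+1)) - (v (i+1) - v i)))"
    using sbp[of v n "\<lambda>i. v (i+1) - v i"] assms by (simp add: numeral_2_eq_2)
  finally show ?thesis by (simp add: algebra_simps)
qed

lemma algMo:
  fixes dx dt L Gd mu D Pd vv :: real
  assumes "dx > 0" "dt > 0" "L/dt + Gd/(2*dx) = mu*D/dx\<^sup>2 - Pd/dx"
  shows "dx*(vv*L) + dt/2*(vv*Gd) = mu*dt/dx*(vv*D) - dt*(vv*Pd)"
proof -
  have l: "dx*(vv*L) + dt/2*(vv*Gd) = dx*dt * vv * (L/dt + Gd/(2*dx))" using assms(1,2) by (simp add: field_simps)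
  have r: "mu*dt/dx*(vv*D) - dt*(vv*Pd) = dx*dt * vv * (mu*D/dx\<^sup>2 - Pd/dx)" using assms(1,2) by (simp add: field_simps power2_eq_square)
  show ?thesis unfolding l r assms(3) ..
qed

lemma step:
  fixes r r0 v v0 rsk thk :: "nat \<Rightarrow> real" and n :: nat and a g mu dx dt :: real
  assumes dx: "dx > 0" and dt: "dt > 0" and g: "g > 1"
  and rpos: "\<forall>i<Suc n. r i > 0" and r0pos: "\<forall>i<Suc n. r0 i > 0"
  and bc: "v 0 = 0" "v (Suc n) = 0"
  and C: "\<forall>i<Suc n. (r i - r0 i) / dt + (UpRU (Suc n) r v (i+1) - UpRU (Suc n) r v i) / dx = 0"
  and Mo: "\<forall>i<Suc n - 1.
        ((r i * uhat v i + r (i+1) * uhat v (i+1)) / 2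
          - (r0 i * uhat v0 i + r0 (i+1) * uhat v0 (i+1)) / 2) / dt
        + (UpRUU (Suc n) r v (i+2) - UpRUU (Suc n) r v i) / (2 * dx)
        = mu * (v i - 2 * v (i+1) + v (i+2)) / dx\<^sup>2
          - (pres a g (r (i+1)) - pres a g (r i)) / dx"
  and T1: "\<forall>i<Suc n. pres a g (r0 i) = pres a g (r i) + a*g*r i powr (g-1)*(r0 i - r i) + pres2 a g (rsk i) / 2 * (r0 i - r i)\<^sup>2"
  and T2: "\<forall>i<Suc n - 1. v (i+1) * (pres a g (r (i+1)) - pres a g (r i))
       - (r i * pospart (v (i+1)) + r (i+1) * negpart (v (i+1))) * (dps a g (r (i+1)) - dps a g (r i))
       = \<bar>v (i+1)\<bar> * pres2 a g (thk i) / (2*(g-1)) * (r (i+1) - r i)\<^sup>2"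
  shows "energy a g (Suc n) dx r v
        + mu * dt * dx * (\<Sum>i<Suc n. ((v (i+1) - v i) / dx)\<^sup>2)
        + dt\<^sup>2 * dx / (2 * (g - 1)) * (\<Sum>i<Suc n. pres2 a g (rsk i) * ((r i - r0 i) / dt)\<^sup>2)
        + dt * dx\<^sup>2 / (2 * (g - 1)) * (\<Sum>i<Suc n - 1. pres2 a g (thk i) * ((r (i+1) - r i) / dx)\<^sup>2 * \<bar>v (i+1)\<bar>)
        + dt\<^sup>2 * dx / 2 * (\<Sum>i<Suc n. r0 i * ((uhat v i - uhat v0 i) / dt)\<^sup>2)
        + dt * dx\<^sup>2 / 2 * (\<Sum>i<Suc n - 1. \<bar>UpRU (Suc n) r v (i+1)\<bar> * ((uhat v (i+1) - uhat v i) / dx)\<^sup>2)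
        = energy a g (Suc n) dx r0 v0"
proof -
  define F where "F = UpRU (Suc n) r v"
  define G where "G = UpRUU (Suc n) r v"
  define w where "w = uhat v"
  define w0 where "w0 = uhat v0"
  define P where "P = (\<lambda>i. pres a g (r i))"
  define P0 where "P0 = (\<lambda>i. pres a g (r0 i))"
  define dp where "dp = (\<lambda>i. dps a g (r i))"
  define K where "K = (\<Sum>i<Suc n. r i * (w i)\<^sup>2 / 2)"
  define K0 where "K0 = (\<Sum>i<Suc n. r0 i * (w0 i)\<^sup>2 / 2)"
  define SP where "SP = (\<Sum>i<Suc n. P i / (g-1))"
  define SP0 where "SP0 = (\<Sum>i<Suc n. P0 i / (g-1))"
  define A1 where "A1 = (\<Sum>i<Suc n. pres2 a g (rsk i) / (2*(g-1)) * (r i - r0 i)\<^sup>2)"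
  define X where "X = (\<Sum>i<n. F (i+1) * (dp (i+1) - dp i))"
  define Y where "Y = (\<Sum>i<n. v (i+1) * (P (i+1) - P i))"
  define B where "B = (\<Sum>i<Suc n. r0 i * (w i - w0 i)\<^sup>2 / 2)"
  define Z where "Z = (\<Sum>i<n. F (i+1) * ((w (i+1))\<^sup>2 - (w i)\<^sup>2) / 2)"
  define Q where "Q = (\<Sum>i<n. G (i+1) * (w (i+1) - w i))"
  define V where "V = (\<Sum>i<Suc n. (v (i+1) - v i)\<^sup>2)"
  have dx0: "dx \<noteq> 0" and dt0: "dt \<noteq> 0" using dx dt by auto
  have F0: "F 0 = 0" "F (Suc n) = 0" by (simp_all add: F_def UpRU_def)
  have G0: "G 0 = 0" "G (Suc n) = 0" by (simp_all add: G_def UpRUU_def)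
  have Fnode: "\<And>i. i < n \<Longrightarrow> F (i+1) = r i * pospart (v (i+1)) + r (i+1) * negpart (v (i+1))"
    by (simp add: F_def UpRU_def)
  have C': "\<And>i. i < Suc n \<Longrightarrow> dx * (r i - r0 i) = - dt * (F (i+1) - F i)"
  proof -
    fix i assume "i < Suc n"
    then have "(r i - r0 i) / dt + (F (i+1) - F i) / dx = 0" using C by (simp add: F_def)
    then show "dx * (r i - r0 i) = - dt * (F (i+1) - F i)" using dx0 dt0 by (simp add: field_simps)
  qed
  have EA1: "dx * (\<Sum>i<Suc n. dp i * (r i - r0 i)) = dt * X"
  proof -
    have "dx * (\<Sum>i<Suc n. dp i * (r i - r0 i)) = (\<Sum>i<Suc n. dp i * (dx * (r i - r0 i)))"
      by (simp add: sum_distrib_left algebra_simps)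
    also have "\<dots> = (\<Sum>i<Suc n. - dt * (dp i * (F (i+1) - F i)))"
      by (rule sum.cong) (simp_all add: C')
    also have "\<dots> = - dt * (\<Sum>i<Suc n. dp i * (F (i+1) - F i))"
      by (simp add: sum_distrib_left del: sum.lessThan_Suc)
    also have "\<dots> = dt * X" unfolding X_def using sbp[of F n dp] F0 by simp
    finally show ?thesis .
  qed
  have EA2: "(\<Sum>i<Suc n. dp i * (r i - r0 i)) = SP - SP0 + A1"
  proof -
    have "(\<Sum>i<Suc n. dp i * (r i - r0 i)) = (\<Sum>i<Suc n. P i / (g-1) - P0 i / (g-1) + pres2 a g (rsk i) / (2*(g-1)) * (r i - r0 i)\<^sup>2)"
    proof (rule sum.cong)
      fix i assume "i \<in> {..<Suc n}"
      then have "P0 i = P i + a*g*r i powr (g-1)*(r0 i - r i) + pres2 a g (rsk i) / 2 * (r0 i - r i)\<^sup>2"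
        using T1 by (simp add: P_def P0_def)
      then have h: "a*g*r i powr (g-1)*(r i - r0 i) = P i - P0 i + pres2 a g (rsk i) / 2 * (r i - r0 i)\<^sup>2"
        by (simp add: algebra_simps power2_commute)
      have "dp i * (r i - r0 i) = (a*g*r i powr (g-1)*(r i - r0 i)) / (g-1)"
        by (simp add: dp_def dps_def)
      also have "\<dots> = (P i - P0 i + pres2 a g (rsk i) / 2 * (r i - r0 i)\<^sup>2) / (g-1)" unfolding h ..
      also have "\<dots> = P i / (g-1) - P0 i / (g-1) + pres2 a g (rsk i) / (2*(g-1)) * (r i - r0 i)\<^sup>2"
        by (simp add: add_divide_distrib diff_divide_distrib)
      finally show "dp i * (r i - r0 i) = P i / (g-1) - P0 i / (g-1) + pres2 a g (rsk i) / (2*(g-1)) * (r i - r0 i)\<^sup>2" .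
    qed simp
    then show ?thesis by (simp add: SP_def SP0_def A1_def sum.distrib sum_subtractf)
  qed
  have n1: "dt\<^sup>2 * dx / (2 * (g - 1)) * (\<Sum>i<Suc n. pres2 a g (rsk i) * ((r i - r0 i) / dt)\<^sup>2) = dx * A1"
    unfolding A1_def sum_distrib_left
  proof (rule sum.cong)
    fix i
    have "dt\<^sup>2 * dx / (2 * (g - 1)) * (pres2 a g (rsk i) * ((r i - r0 i) / dt)\<^sup>2)
        = (dt\<^sup>2 / dt\<^sup>2) * (dx * (pres2 a g (rsk i) / (2 * (g - 1)) * (r i - r0 i)\<^sup>2))"
      by (simp add: power_divide)
    then show "dt\<^sup>2 * dx / (2 * (g - 1)) * (pres2 a g (rsk i) * ((r i - r0 i) / dt)\<^sup>2)
        = dx * (pres2 a g (rsk i) / (2 * (g - 1)) * (r i - r0 i)\<^sup>2)" using dt0 by simp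
  qed simp
  define mm where "mm = (\<lambda>i. r i * w i - r0 i * w0 i)"
  have eqi: "\<And>i. i < n \<Longrightarrow> dx*(v (i+1)*((mm i + mm (i+1))/2)) + dt/2*(v (i+1)*(G (i+2) - G i))
      = mu*dt/dx*(v (i+1)*(v i - 2 * v (i+1) + v (i+2))) - dt*(v (i+1)*(P (i+1) - P i))"
  proof -
    fix i assume i: "i < n"
    have e: "((mm i + mm (i+1))/2)/dt + (G (i+2) - G i)/(2*dx) = mu*(v i - 2 * v (i+1) + v (i+2))/dx\<^sup>2 - (P (i+1) - P i)/dx"
    proof -
      have m: "(mm i + mm (i+1))/2 = (r i * w i + r (i+1) * w (i+1)) / 2 - (r0 i * w0 i + r0 (i+1) * w0 (i+1)) / 2"
        by (simp add: mm_def field_simps)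
      have mo: "((r i * uhat v i + r (i+1) * uhat v (i+1)) / 2
          - (r0 i * uhat v0 i + r0 (i+1) * uhat v0 (i+1)) / 2) / dt
        + (UpRUU (Suc n) r v (i+2) - UpRUU (Suc n) r v i) / (2 * dx)
        = mu * (v i - 2 * v (i+1) + v (i+2)) / dx\<^sup>2
          - (pres a g (r (i+1)) - pres a g (r i)) / dx" using Mo i by simp
      show ?thesis unfolding m G_def P_def w_def w0_def by (rule mo)
    qed
    show "?thesis i" by (rule algMo[OF dx dt e])
  qed
  have sumMo: "dx*(\<Sum>i<n. v (i+1)*(mm i + mm (i+1))/2) + dt/2*(\<Sum>i<n. v (i+1)*(G (i+2) - G i))
      = mu*dt/dx*(\<Sum>i<n. v (i+1)*(v i - 2 * v (i+1) + v (i+2))) - dt*Y"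
  proof -
    have "(\<Sum>i<n. dx*(v (i+1)*((mm i + mm (i+1))/2)) + dt/2*(v (i+1)*(G (i+2) - G i)))
      = (\<Sum>i<n. mu*dt/dx*(v (i+1)*(v i - 2 * v (i+1) + v (i+2))) - dt*(v (i+1)*(P (i+1) - P i)))"
      by (rule sum.cong[OF refl]) (rule eqi, simp)
    then have h: "(\<Sum>i<n. dx*(v (i+1)*((mm i + mm (i+1))/2))) + (\<Sum>i<n. dt/2*(v (i+1)*(G (i+2) - G i)))
      = (\<Sum>i<n. mu*dt/dx*(v (i+1)*(v i - 2 * v (i+1) + v (i+2)))) - (\<Sum>i<n. dt*(v (i+1)*(P (i+1) - P i)))"
      by (simp only: sum.distrib sum_subtractf)
    have h1: "(\<Sum>i<n. dx*(v (i+1)*((mm i + mm (i+1))/2))) = dx*(\<Sum>i<n. v (i+1)*(mm i + mm (i+1))/2)"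
      by (simp add: sum_distrib_left)
    have h2: "(\<Sum>i<n. dt/2*(v (i+1)*(G (i+2) - G i))) = dt/2*(\<Sum>i<n. v (i+1)*(G (i+2) - G i))"
      by (simp only: sum_distrib_left)
    have h3: "(\<Sum>i<n. mu*dt/dx*(v (i+1)*(v i - 2 * v (i+1) + v (i+2)))) = mu*dt/dx*(\<Sum>i<n. v (i+1)*(v i - 2 * v (i+1) + v (i+2)))"
      by (simp only: sum_distrib_left)
    have h4: "(\<Sum>i<n. dt*(v (i+1)*(P (i+1) - P i))) = dt*Y"
      by (simp only: Y_def sum_distrib_left)
    show ?thesis using h unfolding h1 h2 h3 h4 .
  qed
  have tk: "(\<Sum>i<n. v (i+1)*(mm i + mm (i+1))/2) = (\<Sum>i<Suc n. mm i * w i)"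
    using tkin[of v n mm] bc by (simp add: w_def uhat_def)
  have kinp: "(\<Sum>i<Suc n. mm i * w i) = K - K0 + (\<Sum>i<Suc n. (r i - r0 i) * (w i)\<^sup>2 / 2) + B"
  proof -
    have "(\<Sum>i<Suc n. mm i * w i) = (\<Sum>i<Suc n. r i * (w i)\<^sup>2 / 2 - r0 i * (w0 i)\<^sup>2 / 2 + (r i - r0 i) * (w i)\<^sup>2 / 2 + r0 i * (w i - w0 i)\<^sup>2 / 2)"
      by (rule sum.cong) (simp_all add: mm_def power2_eq_square field_simps)
    then show ?thesis by (simp add: K_def K0_def B_def sum.distrib sum_subtractf)
  qed
  have kz: "dx * (\<Sum>i<Suc n. (r i - r0 i) * (w i)\<^sup>2 / 2) = dt * Z"
  proof -
    have "dx * (\<Sum>i<Suc n. (r i - r0 i) * (w i)\<^sup>2 / 2) = (\<Sum>i<Suc n. (w i)\<^sup>2 / 2 * (dx * (r i - r0 i)))"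
      by (simp add: sum_distrib_left algebra_simps)
    also have "\<dots> = (\<Sum>i<Suc n. - dt * ((w i)\<^sup>2 / 2 * (F (i+1) - F i)))"
      by (rule sum.cong) (simp_all add: C')
    also have "\<dots> = - dt * (\<Sum>i<Suc n. (w i)\<^sup>2 / 2 * (F (i+1) - F i))"
      by (simp add: sum_distrib_left del: sum.lessThan_Suc)
    also have "\<dots> = dt * (\<Sum>i<n. F (i+1) * ((w (i+1))\<^sup>2 / 2 - (w i)\<^sup>2 / 2))"
      using sbp[of F n "\<lambda>i. (w i)\<^sup>2 / 2"] F0 by simp
    also have "\<dots> = dt * Z" unfolding Z_def by (simp add: diff_divide_distrib right_diff_distrib)
    finally show ?thesis .
  qed
  have cv: "(\<Sum>i<n. v (i+1)*(G (i+2) - G i)) = -2 * Q"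
  proof -
    have "(\<Sum>i<n. v (i+1)*(G (i+2) - G i)) = (\<Sum>i<n. G (i+1) * (v i - v (i+2)))"
      using conv[of v n G] bc G0 by simp
    also have "\<dots> = (\<Sum>i<n. -2 * (G (i+1) * (w (i+1) - w i)))"
      by (rule sum.cong) (simp_all add: w_def uhat_def field_simps)
    also have "\<dots> = -2 * Q" by (simp add: Q_def sum_distrib_left)
    finally show ?thesis .
  qed
  have vs: "(\<Sum>i<n. v (i+1)*(v i - 2 * v (i+1) + v (i+2))) = - V"
    using visc[of v n] bc by (simp add: V_def)
  have EM: "dx * K - dx * K0 + dx * B + dt * Z - dt * Q = - (mu*dt/dx*V) - dt * Y"
  proof -
    have "dx * (K - K0 + (\<Sum>i<Suc n. (r i - r0 i) * (w i)\<^sup>2 / 2) + B) + dt/2*(-2*Q) = mu*dt/dx*(-V) - dt*Y"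
      using sumMo unfolding tk kinp cv vs .
    then show ?thesis using kz by (simp add: algebra_simps)
  qed
  have n3: "dt\<^sup>2 * dx / 2 * (\<Sum>i<Suc n. r0 i * ((uhat v i - uhat v0 i) / dt)\<^sup>2) = dx * B"
    unfolding B_def sum_distrib_left w_def w0_def
    by (rule sum.cong) (use dt0 in \<open>simp_all add: field_simps power2_eq_square\<close>)
  have n4: "dt * dx\<^sup>2 / 2 * (\<Sum>i<Suc n - 1. \<bar>UpRU (Suc n) r v (i+1)\<bar> * ((uhat v (i+1) - uhat v i) / dx)\<^sup>2) = dt * Z - dt * Q"
  proof -
    have "dt * dx\<^sup>2 / 2 * (\<Sum>i<Suc n - 1. \<bar>UpRU (Suc n) r v (i+1)\<bar> * ((uhat v (i+1) - uhat v i) / dx)\<^sup>2)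
       = dt * (\<Sum>i<n. F (i+1) * ((w (i+1))\<^sup>2 - (w i)\<^sup>2) / 2 - G (i+1) * (w (i+1) - w i))"
      unfolding sum_distrib_left
    proof (rule sum.cong)
      fix i assume "i \<in> {..<n}"
      then have i: "i < n" by simp
      have nk: "F (i+1) * ((w (i+1))\<^sup>2 - (w i)\<^sup>2) / 2 - G (i+1) * (w (i+1) - w i) = \<bar>F (i+1)\<bar> * (w (i+1) - w i)\<^sup>2 / 2"
        using node_kin[of "i+1" "Suc n" r v] i rpos by (simp add: F_def G_def w_def)
      show "dt * dx\<^sup>2 / 2 * (\<bar>UpRU (Suc n) r v (i+1)\<bar> * ((uhat v (i+1) - uhat v i) / dx)\<^sup>2)
        = dt * (F (i+1) * ((w (i+1))\<^sup>2 - (w i)\<^sup>2) / 2 - G (i+1) * (w (i+1) - w i))"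
        unfolding nk using dx0 by (simp add: F_def w_def field_simps power2_eq_square)
    qed simp
    then show ?thesis by (simp add: Z_def Q_def sum_subtractf right_diff_distrib)
  qed
  have n2: "dt * dx\<^sup>2 / (2 * (g - 1)) * (\<Sum>i<Suc n - 1. pres2 a g (thk i) * ((r (i+1) - r i) / dx)\<^sup>2 * \<bar>v (i+1)\<bar>) = dt * Y - dt * X"
  proof -
    have "dt * dx\<^sup>2 / (2 * (g - 1)) * (\<Sum>i<Suc n - 1. pres2 a g (thk i) * ((r (i+1) - r i) / dx)\<^sup>2 * \<bar>v (i+1)\<bar>)
       = dt * (\<Sum>i<n. v (i+1) * (P (i+1) - P i) - F (i+1) * (dp (i+1) - dp i))"
      unfolding sum_distrib_left
    proof (rule sum.cong)
      fix i assume "i \<in> {..<n}"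
      then have i: "i < n" by simp
      have t: "v (i+1) * (P (i+1) - P i) - F (i+1) * (dp (i+1) - dp i) = \<bar>v (i+1)\<bar> * pres2 a g (thk i) / (2*(g-1)) * (r (i+1) - r i)\<^sup>2"
        using T2 i Fnode[OF i] by (simp add: P_def dp_def)
      show "dt * dx\<^sup>2 / (2 * (g - 1)) * (pres2 a g (thk i) * ((r (i+1) - r i) / dx)\<^sup>2 * \<bar>v (i+1)\<bar>)
        = dt * (v (i+1) * (P (i+1) - P i) - F (i+1) * (dp (i+1) - dp i))"
        unfolding t using dx0 g by (simp add: field_simps power2_eq_square)
    qed simp
    then show ?thesis by (simp add: X_def Y_def sum_subtractf right_diff_distrib)
  qed
  have vterm: "mu * dt * dx * (\<Sum>i<Suc n. ((v (i+1) - v i) / dx)\<^sup>2) = mu*dt/dx*V"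
    unfolding V_def sum_distrib_left
    by (rule sum.cong) (use dx0 in \<open>simp_all add: field_simps power2_eq_square\<close>)
  have E1: "energy a g (Suc n) dx r v = dx * K + dx * SP"
    by (simp add: energy_def K_def SP_def P_def w_def sum.distrib distrib_left)
  have E0: "energy a g (Suc n) dx r0 v0 = dx * K0 + dx * SP0"
    by (simp add: energy_def K0_def SP0_def P0_def w0_def sum.distrib distrib_left)
  have EA: "dx * SP - dx * SP0 + dx * A1 = dt * X" using EA1 unfolding EA2 by (simp add: algebra_simps del: sum.lessThan_Suc)
  show ?thesis unfolding E1 E0 vterm n1 n2 n3 n4 using EA EM by linarith
qed

lemma pres2_nonneg: "a > 0 \<Longrightarrow> g > 1 \<Longrightarrow> pres2 a g t \<ge> 0"
  by (simp add: pres2_def)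

theorem proposition3p3:
  fixes L \<mu> a \<gamma> T dx dt :: real and N M :: nat
    and rho0 u0 :: "real \<Rightarrow> real" and rho u :: "nat \<Rightarrow> nat \<Rightarrow> real"
  assumes "L > 0" "\<mu> > 0" "a > 0" "\<gamma> > 1" "T > 0" "N \<ge> 1" "M \<ge> 1"
    and "dx = L / real N" "dt = T / real M"
    and "set_borel_measurable lborel {0<..<L} rho0"
    and "set_integrable lborel {0<..<L} (\<lambda>x. \<bar>rho0 x\<bar> powr \<gamma>)"
    and "\<forall>x\<in>{0<..<L}. rho0 x > 0"
    and "bounded (u0 ` {0..L})"
    and "num_solution \<mu> a \<gamma> L N M dx dt rho0 u0 rho u"
    and "\<forall>k\<le>M. \<forall>i<N. rho k i > 0"
  shows "\<forall>m\<in>{1..M}. \<exists>rs \<theta> :: nat \<Rightarrow> nat \<Rightarrow> real.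
    (\<forall>k\<in>{1..m}. \<forall>i<N. between (rho (k-1) i) (rho k i) (rs i k)) \<and>
    (\<forall>k\<in>{1..m}. \<forall>i<N-1. between (rho k i) (rho k (i+1)) (\<theta> i k)) \<and>
    (let
       N1 = dt\<^sup>2 * dx / (2 * (\<gamma> - 1)) * (\<Sum>k\<in>{1..m}. \<Sum>i<N.
              pres2 a \<gamma> (rs i k) * ((rho k i - rho (k-1) i) / dt)\<^sup>2);
       N2 = dt * dx\<^sup>2 / (2 * (\<gamma> - 1)) * (\<Sum>k\<in>{1..m}. \<Sum>i<N-1.
              pres2 a \<gamma> (\<theta> i k) * ((rho k (i+1) - rho k i) / dx)\<^sup>2 * \<bar>u k (i+1)\<bar>);
       N3 = dt\<^sup>2 * dx / 2 * (\<Sum>k\<in>{1..m}. \<Sum>i<N.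
              rho (k-1) i * ((uhat (u k) i - uhat (u (k-1)) i) / dt)\<^sup>2);
       N4 = dt * dx\<^sup>2 / 2 * (\<Sum>k\<in>{1..m}. \<Sum>i<N-1.
              \<bar>UpRU N (rho k) (u k) (i+1)\<bar> * ((uhat (u k) (i+1) - uhat (u k) i) / dx)\<^sup>2)
     in energy a \<gamma> N dx (rho m) (u m)
        + \<mu> * dt * dx * (\<Sum>k\<in>{1..m}. \<Sum>i<N. ((u k (i+1) - u k i) / dx)\<^sup>2)
        + N1 + N2 + N3 + N4
        = energy a \<gamma> N dx (rho 0) (u 0)
      \<and> N1 \<ge> 0 \<and> N2 \<ge> 0 \<and> N3 \<ge> 0 \<and> N4 \<ge> 0)"
proof -
  note ns = assms(14)[unfolded num_solution_def]
  have pos: "\<And>k i. k \<le> M \<Longrightarrow> i < N \<Longrightarrow> rho k i > 0" using assms(15) by blast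
  have g: "\<gamma> > 1" and a: "a > 0" using assms by auto
  obtain n where Nsuc: "N = Suc n" using assms(6) by (cases N) auto
  have dx: "dx > 0" using assms(1,6,8) by simp
  have dt: "dt > 0" using assms(5,7,9) by simp
  define rs where "rs = (\<lambda>i k. SOME t. between (rho (k-1) i) (rho k i) t \<and>
     pres a \<gamma> (rho (k-1) i) = pres a \<gamma> (rho k i) + a*\<gamma>*rho k i powr (\<gamma>-1)*(rho (k-1) i - rho k i) + pres2 a \<gamma> t / 2 * (rho (k-1) i - rho k i)\<^sup>2)"
  define th where "th = (\<lambda>i k. SOME t. between (rho k i) (rho k (i+1)) t \<and>
     u k (i+1) * (pres a \<gamma> (rho k (i+1)) - pres a \<gamma> (rho k i))
       - (rho k i * pospart (u k (i+1)) + rho k (i+1) * negpart (u k (i+1))) * (dps a \<gamma> (rho k (i+1)) - dps a \<gamma> (rho k i))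
       = \<bar>u k (i+1)\<bar> * pres2 a \<gamma> t / (2*(\<gamma>-1)) * (rho k (i+1) - rho k i)\<^sup>2)"
  have rsP: "between (rho (k-1) i) (rho k i) (rs i k) \<and>
     pres a \<gamma> (rho (k-1) i) = pres a \<gamma> (rho k i) + a*\<gamma>*rho k i powr (\<gamma>-1)*(rho (k-1) i - rho k i) + pres2 a \<gamma> (rs i k) / 2 * (rho (k-1) i - rho k i)\<^sup>2"
    if "k \<in> {1..M}" "i < N" for k i
    unfolding rs_def
    by (rule someI_ex, rule taylorP) (use that pos in auto)
  have thP: "between (rho k i) (rho k (i+1)) (th i k) \<and>
     u k (i+1) * (pres a \<gamma> (rho k (i+1)) - pres a \<gamma> (rho k i))
       - (rho k i * pospart (u k (i+1)) + rho k (i+1) * negpart (u k (i+1))) * (dps a \<gamma> (rho k (i+1)) - dps a \<gamma> (rho k i))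
       = \<bar>u k (i+1)\<bar> * pres2 a \<gamma> (th i k) / (2*(\<gamma>-1)) * (rho k (i+1) - rho k i)\<^sup>2"
    if "k \<in> {1..M}" "i < N - 1" for k i
    unfolding th_def
    by (rule someI_ex, rule node_pres) (use that pos g in auto)
  define E where "E = (\<lambda>k. energy a \<gamma> N dx (rho k) (u k))"
  define V where "V = (\<lambda>k. \<Sum>i<N. ((u k (i+1) - u k i) / dx)\<^sup>2)"
  define A where "A = (\<lambda>k. \<Sum>i<N. pres2 a \<gamma> (rs i k) * ((rho k i - rho (k-1) i) / dt)\<^sup>2)"
  define B where "B = (\<lambda>k. \<Sum>i<N-1. pres2 a \<gamma> (th i k) * ((rho k (i+1) - rho k i) / dx)\<^sup>2 * \<bar>u k (i+1)\<bar>)"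
  define C where "C = (\<lambda>k. \<Sum>i<N. rho (k-1) i * ((uhat (u k) i - uhat (u (k-1)) i) / dt)\<^sup>2)"
  define D where "D = (\<lambda>k. \<Sum>i<N-1. \<bar>UpRU N (rho k) (u k) (i+1)\<bar> * ((uhat (u k) (i+1) - uhat (u k) i) / dx)\<^sup>2)"
  define c1 where "c1 = dt\<^sup>2 * dx / (2 * (\<gamma> - 1))"
  define c2 where "c2 = dt * dx\<^sup>2 / (2 * (\<gamma> - 1))"
  define c3 where "c3 = dt\<^sup>2 * dx / 2"
  define c4 where "c4 = dt * dx\<^sup>2 / 2"
  have stepk: "E k + \<mu> * dt * dx * V k + c1 * A k + c2 * B k + c3 * C k + c4 * D k = E (k-1)"
    if k: "k \<in> {1..M}" for k
  proof -
    have km: "k - 1 \<le> M" "k \<le> M" using k by auto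
    have C0: "\<forall>i<Suc n. (rho k i - rho (k-1) i) / dt + (UpRU (Suc n) (rho k) (u k) (i+1) - UpRU (Suc n) (rho k) (u k) i) / dx = 0"
      using ns k Nsuc by auto
    have Mo0: "\<forall>i<Suc n - 1.
        ((rho k i * uhat (u k) i + rho k (i+1) * uhat (u k) (i+1)) / 2
          - (rho (k-1) i * uhat (u (k-1)) i + rho (k-1) (i+1) * uhat (u (k-1)) (i+1)) / 2) / dt
        + (UpRUU (Suc n) (rho k) (u k) (i+2) - UpRUU (Suc n) (rho k) (u k) i) / (2 * dx)
        = \<mu> * (u k i - 2 * u k (i+1) + u k (i+2)) / dx\<^sup>2
          - (pres a \<gamma> (rho k (i+1)) - pres a \<gamma> (rho k i)) / dx"
      using ns k Nsuc by blast
    have bc: "u k 0 = 0" "u k (Suc n) = 0" using ns k Nsuc by auto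
    have T1: "\<forall>i<Suc n. pres a \<gamma> (rho (k-1) i) = pres a \<gamma> (rho k i) + a*\<gamma>*rho k i powr (\<gamma>-1)*(rho (k-1) i - rho k i) + pres2 a \<gamma> (rs i k) / 2 * (rho (k-1) i - rho k i)\<^sup>2"
      using rsP k Nsuc by blast
    have T2: "\<forall>i<Suc n - 1. u k (i+1) * (pres a \<gamma> (rho k (i+1)) - pres a \<gamma> (rho k i))
       - (rho k i * pospart (u k (i+1)) + rho k (i+1) * negpart (u k (i+1))) * (dps a \<gamma> (rho k (i+1)) - dps a \<gamma> (rho k i))
       = \<bar>u k (i+1)\<bar> * pres2 a \<gamma> (th i k) / (2*(\<gamma>-1)) * (rho k (i+1) - rho k i)\<^sup>2"
      using thP k Nsuc by blast
    have rp: "\<forall>i<Suc n. rho k i > 0" "\<forall>i<Suc n. rho (k-1) i > 0" using pos km Nsuc by auto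
    note st = step[OF dx dt g rp bc C0 Mo0 T1 T2]
    show ?thesis using st unfolding Nsuc[symmetric] E_def V_def A_def B_def C_def D_def c1_def c2_def c3_def c4_def
      by simp
  qed
  have inv: "m \<le> M \<Longrightarrow> E m + \<mu> * dt * dx * sum V {1..m} + c1 * sum A {1..m} + c2 * sum B {1..m}
      + c3 * sum C {1..m} + c4 * sum D {1..m} = E 0" for m
  proof (induction m)
    case 0 then show ?case by simp
  next
    case (Suc m)
    have "E (Suc m) + \<mu> * dt * dx * V (Suc m) + c1 * A (Suc m) + c2 * B (Suc m) + c3 * C (Suc m) + c4 * D (Suc m) = E m"
      using stepk[of "Suc m"] Suc.prems by simp
    then show ?case using Suc by (simp add: distrib_left)
  qed
  show ?thesis
  proof
    fix m assume m: "m \<in> {1..M}"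
    have nn1: "A k \<ge> 0" "B k \<ge> 0" if "k \<in> {1..m}" for k
      unfolding A_def B_def using pres2_nonneg[OF a g]
      by (auto intro!: sum_nonneg mult_nonneg_nonneg)
    have nn2: "C k \<ge> 0" "D k \<ge> 0" if "k \<in> {1..m}" for k
      unfolding C_def D_def using that m
      by (auto intro!: sum_nonneg mult_nonneg_nonneg less_imp_le[OF pos])
    have c: "c1 \<ge> 0" "c2 \<ge> 0" "c3 \<ge> 0" "c4 \<ge> 0" using dt dx g by (simp_all add: c1_def c2_def c3_def c4_def)
    have s: "sum A {1..m} \<ge> 0" "sum B {1..m} \<ge> 0" "sum C {1..m} \<ge> 0" "sum D {1..m} \<ge> 0"
      using nn1 nn2 by (auto intro!: sum_nonneg)
    have I: "E m + \<mu> * dt * dx * sum V {1..m} + c1 * sum A {1..m} + c2 * sum B {1..m}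
      + c3 * sum C {1..m} + c4 * sum D {1..m} = E 0" using inv m by simp
    have b1: "\<forall>k\<in>{1..m}. \<forall>i<N. between (rho (k-1) i) (rho k i) (rs i k)" using rsP m by auto
    have b2: "\<forall>k\<in>{1..m}. \<forall>i<N-1. between (rho k i) (rho k (i+1)) (th i k)" using thP m by auto
    show "\<exists>rs \<theta> :: nat \<Rightarrow> nat \<Rightarrow> real.
    (\<forall>k\<in>{1..m}. \<forall>i<N. between (rho (k-1) i) (rho k i) (rs i k)) \<and>
    (\<forall>k\<in>{1..m}. \<forall>i<N-1. between (rho k i) (rho k (i+1)) (\<theta> i k)) \<and>
    (let
       N1 = dt\<^sup>2 * dx / (2 * (\<gamma> - 1)) * (\<Sum>k\<in>{1..m}. \<Sum>i<N.
              pres2 a \<gamma> (rs i k) * ((rho k i - rho (k-1) i) / dt)\<^sup>2);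
       N2 = dt * dx\<^sup>2 / (2 * (\<gamma> - 1)) * (\<Sum>k\<in>{1..m}. \<Sum>i<N-1.
              pres2 a \<gamma> (\<theta> i k) * ((rho k (i+1) - rho k i) / dx)\<^sup>2 * \<bar>u k (i+1)\<bar>);
       N3 = dt\<^sup>2 * dx / 2 * (\<Sum>k\<in>{1..m}. \<Sum>i<N.
              rho (k-1) i * ((uhat (u k) i - uhat (u (k-1)) i) / dt)\<^sup>2);
       N4 = dt * dx\<^sup>2 / 2 * (\<Sum>k\<in>{1..m}. \<Sum>i<N-1.
              \<bar>UpRU N (rho k) (u k) (i+1)\<bar> * ((uhat (u k) (i+1) - uhat (u k) i) / dx)\<^sup>2)
     in energy a \<gamma> N dx (rho m) (u m)
        + \<mu> * dt * dx * (\<Sum>k\<in>{1..m}. \<Sum>i<N. ((u k (i+1) - u k i) / dx)\<^sup>2)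
        + N1 + N2 + N3 + N4
        = energy a \<gamma> N dx (rho 0) (u 0)
      \<and> N1 \<ge> 0 \<and> N2 \<ge> 0 \<and> N3 \<ge> 0 \<and> N4 \<ge> 0)"
    proof (rule exI[of _ rs], rule exI[of _ th], rule conjI[OF b1], rule conjI[OF b2])
      have eqs: "(\<Sum>k\<in>{1..m}. \<Sum>i<N. pres2 a \<gamma> (rs i k) * ((rho k i - rho (k-1) i) / dt)\<^sup>2) = sum A {1..m}"
        "(\<Sum>k\<in>{1..m}. \<Sum>i<N-1. pres2 a \<gamma> (th i k) * ((rho k (i+1) - rho k i) / dx)\<^sup>2 * \<bar>u k (i+1)\<bar>) = sum B {1..m}"
        "(\<Sum>k\<in>{1..m}. \<Sum>i<N. rho (k-1) i * ((uhat (u k) i - uhat (u (k-1)) i) / dt)\<^sup>2) = sum C {1..m}"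
        "(\<Sum>k\<in>{1..m}. \<Sum>i<N-1. \<bar>UpRU N (rho k) (u k) (i+1)\<bar> * ((uhat (u k) (i+1) - uhat (u k) i) / dx)\<^sup>2) = sum D {1..m}"
        "(\<Sum>k\<in>{1..m}. \<Sum>i<N. ((u k (i+1) - u k i) / dx)\<^sup>2) = sum V {1..m}"
        "energy a \<gamma> N dx (rho m) (u m) = E m" "energy a \<gamma> N dx (rho 0) (u 0) = E 0"
        by (simp_all add: A_def B_def C_def D_def V_def E_def)
      show "let
       N1 = dt\<^sup>2 * dx / (2 * (\<gamma> - 1)) * (\<Sum>k\<in>{1..m}. \<Sum>i<N.
              pres2 a \<gamma> (rs i k) * ((rho k i - rho (k-1) i) / dt)\<^sup>2);
       N2 = dt * dx\<^sup>2 / (2 * (\<gamma> - 1)) * (\<Sum>k\<in>{1..m}. \<Sum>i<N-1.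
              pres2 a \<gamma> (th i k) * ((rho k (i+1) - rho k i) / dx)\<^sup>2 * \<bar>u k (i+1)\<bar>);
       N3 = dt\<^sup>2 * dx / 2 * (\<Sum>k\<in>{1..m}. \<Sum>i<N.
              rho (k-1) i * ((uhat (u k) i - uhat (u (k-1)) i) / dt)\<^sup>2);
       N4 = dt * dx\<^sup>2 / 2 * (\<Sum>k\<in>{1..m}. \<Sum>i<N-1.
              \<bar>UpRU N (rho k) (u k) (i+1)\<bar> * ((uhat (u k) (i+1) - uhat (u k) i) / dx)\<^sup>2)
     in energy a \<gamma> N dx (rho m) (u m)
        + \<mu> * dt * dx * (\<Sum>k\<in>{1..m}. \<Sum>i<N. ((u k (i+1) - u k i) / dx)\<^sup>2)
        + N1 + N2 + N3 + N4
        = energy a \<gamma> N dx (rho 0) (u 0)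
      \<and> N1 \<ge> 0 \<and> N2 \<ge> 0 \<and> N3 \<ge> 0 \<and> N4 \<ge> 0"
        unfolding Let_def eqs c1_def[symmetric] c2_def[symmetric] c3_def[symmetric] c4_def[symmetric]
        using I c s by simp
    qed
  qed
qed

end
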